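(* Let $m\ge1$, let $\Omega$ be a set with $|\Omega|=2^m$, and let $D:\Omega\to[0,1]$ satisfy $\sum_{y\in\Omega}D(y)\le1$. Let $H=\sum_{y\in\Omega}D(y)\log\frac1{D(y)}$. (i) If $H\ge1$, then $$\frac{\sum_{y\in\Omega}D(y)(\log D(y))^2}{H^2}\le\Big(1+\frac{\log(m+\log m+1.1)}{m}\Big)m = m+\log(m+\log m+1.1).$$ (ii) If $H\le1$ and $m\ge2$, then $$\sum_{y\in\Omega}D(y)(\log D(y))^2\le m+\log(m+\log m+2.5).$$
   Context: All logarithms are base 2, with the convention $0\log\frac10=0$ and $0\cdot(\log 0)^2=0$. *)

theory Defs
  imports Complex_Main
begin

(* Entropy (base 2) with the convention 0 log(1/0) = 0; in Isabelle log 2 0 = 0,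
   so the convention holds automatically, but we make it explicit. *)
definition entropy2 :: "('a \<Rightarrow> real) \<Rightarrow> 'a set \<Rightarrow> real" where
  "entropy2 D \<Omega> = (\<Sum>y\<in>\<Omega>. if D y = 0 then 0 else D y * log 2 (1 / D y))"

definition logsq_moment :: "('a \<Rightarrow> real) \<Rightarrow> 'a set \<Rightarrow> real" where
  "logsq_moment D \<Omega> = (\<Sum>y\<in>\<Omega>. if D y = 0 then 0 else D y * (log 2 (D y))^2)"

end

theory Submission
  imports Defs
begin

lemma pow2_root_le:
  fixes K :: real
  assumes "0 \<le> K" "K^n \<le> 2^p" "n > 0"
  shows "K \<le> 2 powr (real p / real n)"
proof -
  have "(2 powr (real p / real n))^n = 2 powr (real n * (real p / real n))"
    by (simp add: powr_realpow[symmetric] powr_powr mult.commute)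
  also have "\<dots> = 2^p" using assms(3) by (simp add: powr_realpow)
  finally have "K^n \<le> (2 powr (real p / real n))^n" using assms(2) by simp
  thus ?thesis using power_le_imp_le_base[of K "n-1" "2 powr (real p / real n)"] assms(3) by simp
qed

lemma pow2_root_ge:
  fixes K :: real
  assumes "0 \<le> K" "2^p \<le> K^n" "n > 0"
  shows "2 powr (real p / real n) \<le> K"
proof -
  have "(2 powr (real p / real n))^n = 2 powr (real n * (real p / real n))"
    by (simp add: powr_realpow[symmetric] powr_powr mult.commute)
  also have "\<dots> = 2^p" using assms(3) by (simp add: powr_realpow)
  finally have "(2 powr (real p / real n))^n \<le> K^n" using assms(2) by simp
  thus ?thesis using power_le_imp_le_base[of "2 powr (real p / real n)" "n-1" K] assms by simp
qed

lemma exp_T3: "1 + y + y^2/2 + y^3/6 \<le> exp (y::real)"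
proof -
  obtain t where "exp y = (\<Sum>m<4. y ^ m / fact m) + exp t / fact 4 * y ^ 4"
    using Maclaurin_exp_le[of y 4] by blast
  moreover have "(\<Sum>m<4. y ^ m / fact m) = 1 + y + y^2/2 + y^3/6"
    by (simp add: numeral_eq_Suc fact_numeral power2_eq_square power3_eq_cube)
  moreover have "0 \<le> exp t / fact 4 * y ^ 4" by (simp add: zero_le_even_power)
  ultimately show ?thesis by linarith
qed

lemma ln2_ge: "2/3 \<le> ln (2::real)"
proof -
  have "1 + (-2/3) + (-2/3)^2/2 + (-2/3)^3/6 \<le> exp (-2/3::real)" using exp_T3[of "-2/3"] by simp
  hence "41/81 \<le> exp (-2/3::real)" by (simp add: power2_eq_square power3_eq_cube)
  hence "exp (2/3::real) \<le> 2"
    by (simp add: exp_minus field_simps)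
  hence "ln (exp (2/3::real)) \<le> ln 2" by (subst ln_le_cancel_iff) auto
  thus ?thesis by simp
qed


lemma sq_le_pow2: "4 \<le> m \<Longrightarrow> m^2 \<le> (2::nat)^m"
proof (induction m rule: dec_induct)
  case base thus ?case by simp
next
  case (step n)
  have "(Suc n)^2 = n^2 + 2*n + 1" by (simp add: power2_eq_square)
  also have "\<dots> \<le> 2 * n^2"
  proof -
    have "4*n \<le> n*n" using step(1) by simp
    thus ?thesis unfolding power2_eq_square using step(1) by linarith
  qed
  also have "\<dots> \<le> 2 * 2^n" using step(3) by simp
  finally show ?case by simp
qed

lemma cond_large:
  fixes m :: nat
  assumes m4: "4 \<le> m"
  shows "\<exists>al G. (\<forall>x. 0 \<le> x \<longrightarrow> x*(x-al) \<le> G * 2 powr (x - real m)) \<and> 0 \<le> G \<and> 0 \<le> al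
          \<and> al + G = real m + log 2 (real m + log 2 (real m) + 1.1)"
proof -
  define lam where "lam = ln (2::real)"
  define u where "u = 1 / lam"
  have lam0: "2/3 \<le> lam" using ln2_ge by (simp add: lam_def)
  have u1: "0 < u" "u \<le> 3/2" using lam0 by (auto simp: u_def field_simps)
  have lamu: "lam * u = 1" using lam0 by (simp add: u_def)
  define L where "L = real m + log 2 (real m) + 1.1"
  have lm2: "2 \<le> log 2 (real m)"
  proof -
    have "log 2 (4::real) \<le> log 2 (real m)" using m4 by (subst log_le_cancel_iff) auto
    moreover have "log 2 (4::real) = 2"
    proof -
      have "log 2 (4::real) = log 2 (2^2)" by simp
      also have "\<dots> = 2" by (subst log_nat_power) auto
      finally show ?thesis .
    qed
    ultimately show ?thesis by simp
  qed
  have L71: "7.1 \<le> L" using lm2 m4 by (simp add: L_def)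
  have lmhalf: "log 2 (real m) \<le> real m / 2"
  proof -
    have "real (m^2) \<le> real (2^m)" using sq_le_pow2[OF m4] by (simp only: of_nat_le_iff)
    hence "log 2 (real (m^2)) \<le> log 2 (real (2^m))" using m4 by (subst log_le_cancel_iff) auto
    moreover have "log 2 (real (m^2)) = 2 * log 2 (real m)" using m4 by (simp add: log_nat_power)
    moreover have "log 2 (real (2^m)) = real m" by (simp add: log_nat_power)
    ultimately show ?thesis by simp
  qed
  have L18: "L \<le> 1.8 * real m" using lmhalf m4 by (simp add: L_def)
  have l18: "log 2 (1.8::real) \<le> 17/20"
  proof -
    have "(1.8::real) \<le> 2 powr (real (17::nat) / real (20::nat))"
      by (rule pow2_root_le) (simp_all add: power_divide)
    hence "log 2 (1.8::real) \<le> log 2 (2 powr (17/20))" by (subst log_le_cancel_iff) auto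
    thus ?thesis by simp
  qed
  have Lpos: "0 < L" using L71 by simp
  have logL: "log 2 L \<le> 17/20 + log 2 (real m)"
  proof -
    have "log 2 L \<le> log 2 (1.8 * real m)" using L18 Lpos by (subst log_le_cancel_iff) auto
    also have "\<dots> = log 2 1.8 + log 2 (real m)" using m4 by (subst log_mult) auto
    finally show ?thesis using l18 by simp
  qed
  define eps where "eps = L - real m - log 2 L"
  have eps: "1/4 \<le> eps" using logL by (simp add: eps_def L_def)
  have logL0: "0 \<le> log 2 L" using L71 by simp
  define al where "al = real m + log 2 L - u"
  have al0: "0 \<le> al" using logL0 u1 m4 by (simp add: al_def)
  have key: "x*(x-al) \<le> u * 2 powr (x - real m)" if x0: "0 \<le> x" for x
  proof (cases "x \<le> al")
    case True
    hence "x*(x-al) \<le> 0" using x0 by (simp add: mult_nonneg_nonpos)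
    moreover have "0 \<le> u * 2 powr (x - real m)" using u1 by simp
    ultimately show ?thesis by linarith
  next
    case False
    define h where "h = lam * (x - al) - 1"
    have hm1: "-1 \<le> h" using False lam0 by (simp add: h_def)
    have "(x - real m) * ln 2 = h + ln L"
    proof -
      have "log 2 L * lam = ln L" by (simp add: lam_def log_def)
      thus ?thesis unfolding h_def al_def lam_def[symmetric] using lamu
        by (simp add: algebra_simps)
    qed
    hence p: "2 powr (x - real m) = exp h * L" using Lpos by (simp add: powr_def exp_add)
    have xa: "x - al = (1+h)*u" using lamu by (simp add: h_def algebra_simps)
    have xx: "x = L - eps + h*u" using xa by (simp add: eps_def al_def algebra_simps)
    have main: "(L - eps + h*u)*(1+h) \<le> L * exp h"
    proof (cases "0 \<le> h")
      case True
      have e: "1 + h + h^2/2 \<le> exp h" using exp_lower_Taylor_quadratic True by simp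
      have f1: "u*(h*(1+h)) \<le> 3/2*(h*(1+h))" using u1 True by (intro mult_right_mono) auto
      have f2: "7.1*h^2 \<le> L*h^2" using L71 by (intro mult_right_mono) auto
      have f3: "0 \<le> (h - 25/82)^2" by simp
      have f4: "0 \<le> (eps - 1/4)*(1+h)" using eps True by simp
      have "(L - eps + h*u)*(1+h) \<le> L*(1 + h + h^2/2)"
        using f1 f2 f3 f4 by (simp add: algebra_simps power2_eq_square)
      also have "\<dots> \<le> L * exp h" using e Lpos by (intro mult_left_mono) auto
      finally show ?thesis .
    next
      case False
      have e: "1 + h \<le> exp h" by simp
      have "(L - eps + h*u)*(1+h) \<le> L*(1+h)"
      proof -
        have hu: "h*u \<le> 0" using False u1 by (intro mult_nonpos_nonneg) auto
        have "0 \<le> (1+h)*(eps - h*u)" using hm1 eps hu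
          by (intro mult_nonneg_nonneg) auto
        thus ?thesis by (simp add: algebra_simps)
      qed
      also have "\<dots> \<le> L * exp h" using e Lpos by (intro mult_left_mono) auto
      finally show ?thesis .
    qed
    have "x*(x-al) = u * ((L - eps + h*u)*(1+h))" using xa xx by (simp add: algebra_simps)
    also have "\<dots> \<le> u * (L * exp h)" using main u1 by (intro mult_left_mono) auto
    also have "\<dots> = u * 2 powr (x - real m)" using p by (simp add: mult.commute)
    finally show ?thesis .
  qed
  show ?thesis
    by (rule exI[of _ al], rule exI[of _ u]) (use key u1 al0 in \<open>auto simp: al_def L_def\<close>)
qed

lemma reduction:
  fixes \<Omega> :: "'a set" and D :: "'a \<Rightarrow> real" and m :: nat and al G :: real
  assumes fin: "finite \<Omega>" and card: "card \<Omega> = 2^m"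
    and D: "\<And>y. y \<in> \<Omega> \<Longrightarrow> 0 \<le> D y \<and> D y \<le> 1"
    and cnd: "\<And>x. 0 \<le> x \<Longrightarrow> x*(x-al) \<le> G * 2 powr (x - real m)"
    and G: "0 \<le> G"
  shows "logsq_moment D \<Omega> \<le> al * entropy2 D \<Omega> + G"
proof -
  have pw: "(if D y = 0 then 0 else D y * (log 2 (D y))^2)
       \<le> al * (if D y = 0 then 0 else D y * log 2 (1 / D y)) + G / 2^m" if y: "y \<in> \<Omega>" for y
  proof (cases "D y = 0")
    case True thus ?thesis using G by simp
  next
    case False
    define d where "d = D y"
    have d0: "0 < d" and d1: "d \<le> 1" using D[OF y] False by (auto simp: d_def)
    define x where "x = log 2 (1/d)"
    have x0: "0 \<le> x" unfolding x_def using d0 d1 by simp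
    have ld: "log 2 d = - x" unfolding x_def using d0 by (simp add: log_divide)
    have "2 powr (x - real m) = 2 powr x / 2 powr (real m)" by (simp add: powr_diff)
    also have "\<dots> = (1/d) / 2^m" unfolding x_def using d0 by (simp add: powr_realpow)
    finally have "x*(x-al) \<le> G * ((1/d)/2^m)" using cnd[OF x0] by simp
    hence "d * (x*(x-al)) \<le> d * (G * ((1/d)/2^m))" using d0 by (intro mult_left_mono) auto
    also have "d * (G * ((1/d)/2^m)) = G / 2^m" using d0 by (simp add: field_simps)
    finally have "d * (x*(x-al)) \<le> G / 2^m" .
    thus ?thesis using False ld unfolding d_def[symmetric] x_def[symmetric]
      by (simp add: algebra_simps power2_eq_square)
  qed
  have "logsq_moment D \<Omega> \<le> (\<Sum>y\<in>\<Omega>. al * (if D y = 0 then 0 else D y * log 2 (1 / D y)) + G / 2^m)"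
    unfolding logsq_moment_def by (rule sum_mono) (rule pw)
  also have "\<dots> = al * entropy2 D \<Omega> + G"
    unfolding entropy2_def sum.distrib sum_distrib_left[symmetric] using card by simp
  finally show ?thesis .
qed

lemma K_bound:
  fixes K :: real and m p :: nat
  assumes "0 \<le> K" "K^8 * 2^(8*m) \<le> 2^p"
  shows "K \<le> 2 powr (real p/8 - real m)"
proof -
  have "(2 powr (real p/8 - real m))^8 = 2 powr (8*(real p/8 - real m))"
    by (simp add: powr_realpow[symmetric] powr_powr mult.commute)
  also have "\<dots> = 2 powr (real p) / 2 powr (real (8*m))"
    by (simp add: powr_diff algebra_simps)
  also have "\<dots> = 2^p / 2^(8*m)" by (simp add: powr_realpow[symmetric])
  finally have e: "(2 powr (real p/8 - real m))^8 = 2^p / 2^(8*m)" .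
  have "K^8 \<le> 2^p / 2^(8*m)" using assms(2) by (simp add: field_simps)
  hence "K^8 \<le> (2 powr (real p/8 - real m))^8" using e by simp
  thus ?thesis using power_le_imp_le_base[of K 7 "2 powr (real p/8 - real m)"] by simp
qed

lemma piece_base:
  fixes al G K x :: real and m p :: nat
  assumes x: "real p / 8 \<le> x" and K: "0 \<le> K" "K^8 * 2^(8*m) \<le> 2^p"
    and G: "0 \<le> G"
  shows "G*K - (real p/8)*(real p/8 - al) + (G*K*(2/3) - (2*(real p/8) - al)) * (x - real p/8)
         + (G*K*(2/3)^2/2 - 1) * (x - real p/8)^2 \<le> G * 2 powr (x - real m) - x*(x-al)"
proof -
  define a where "a = real p / 8"
  define t where "t = x - a"
  have t0: "0 \<le> t" using x by (auto simp: a_def t_def field_simps)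
  have Ka: "K \<le> 2 powr (a - real m)" using K_bound[OF K] by (simp add: a_def)
  have sp: "2 powr (x - real m) = 2 powr (a - real m) * 2 powr t"
    by (simp add: t_def powr_add[symmetric])
  have e1: "2 powr t \<ge> 1 + (2/3)*t + ((2/3)*t)^2/2"
  proof -
    have "2 powr t = exp (t * ln 2)" by (simp add: powr_def)
    also have "exp (t * ln 2) \<ge> exp ((2/3)*t)"
      using mult_left_mono[OF ln2_ge t0] by (simp add: mult.commute)
    finally have "exp ((2/3)*t) \<le> 2 powr t" .
    moreover have "1 + (2/3)*t + ((2/3)*t)^2/2 \<le> exp ((2/3)*t)"
      using exp_lower_Taylor_quadratic[of "(2/3)*t"] t0 by simp
    ultimately show ?thesis by linarith
  qed
  have "G * K * (1 + (2/3)*t + ((2/3)*t)^2/2) \<le> G * (2 powr (a - real m) * 2 powr t)"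
  proof -
    have "K * (1 + (2/3)*t + ((2/3)*t)^2/2) \<le> 2 powr (a - real m) * 2 powr t"
      using Ka e1 K(1) t0 by (intro mult_mono) auto
    thus ?thesis using G by (simp add: mult_left_mono mult.assoc)
  qed
  hence "G * K * (1 + (2/3)*t + ((2/3)*t)^2/2) \<le> G * 2 powr (x - real m)" using sp by simp
  moreover have "x = a + t" by (simp add: t_def)
  ultimately show ?thesis unfolding a_def[symmetric] t_def[symmetric]
    by (simp add: algebra_simps power2_eq_square)
qed

lemma piece:
  fixes al G K x ca cb cc :: real and m p j :: nat
  assumes x: "real p / 8 \<le> x" "x \<le> (real p + real j) / 8" and K: "0 \<le> K" "K^8 * 2^(8*m) \<le> 2^p"
    and G: "0 \<le> G"
    and c: "ca = G*K - (real p/8)*(real p/8 - al)" "cb = G*K*(2/3) - (2*(real p/8) - al)"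
       "cc = G*K*(2/3)^2/2 - 1"
    and cond: "0 \<le> ca + min cb 0 * (real j/8) + min cc 0 * (real j/8)^2"
  shows "x*(x-al) \<le> G * 2 powr (x - real m)"
proof -
  define t where "t = x - real p/8"
  have t0: "0 \<le> t" and tw: "t \<le> real j/8" using x by (auto simp: t_def field_simps)
  have b: "ca + cb * t + cc * t^2 \<le> G * 2 powr (x - real m) - x*(x-al)"
    using piece_base[OF x(1) K G, of al] unfolding c t_def .
  have "min cb 0 * (real j/8) \<le> cb * t"
  proof (cases "cb \<ge> 0")
    case True thus ?thesis using t0 tw by (simp add: min_def power_divide power2_eq_square)
  next
    case False thus ?thesis using tw by (simp add: min_def mult_left_mono_neg)
  qed
  moreover have "min cc 0 * (real j/8)^2 \<le> cc * t^2"
  proof (cases "cc \<ge> 0")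
    case True thus ?thesis using t0 tw by (simp add: min_def power_divide power2_eq_square)
  next
    case False
    have "t^2 \<le> (real j/8)^2" using t0 tw by (intro power_mono) auto
    thus ?thesis using False by (simp add: min_def mult_left_mono_neg)
  qed
  ultimately show ?thesis using b cond by linarith
qed

lemma piece_inf:
  fixes al G K x ca cb cc :: real and m p :: nat
  assumes x: "real p / 8 \<le> x" and K: "0 \<le> K" "K^8 * 2^(8*m) \<le> 2^p"
    and G: "0 \<le> G"
    and c: "ca = G*K - (real p/8)*(real p/8 - al)" "cb = G*K*(2/3) - (2*(real p/8) - al)"
       "cc = G*K*(2/3)^2/2 - 1"
    and cond: "0 \<le> ca" "0 < cc" "cb^2 \<le> 4*ca*cc"
  shows "x*(x-al) \<le> G * 2 powr (x - real m)"
proof -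
  define t where "t = x - real p/8"
  have b: "ca + cb * t + cc * t^2 \<le> G * 2 powr (x - real m) - x*(x-al)"
    using piece_base[OF x(1) K G, of al] unfolding c t_def .
  have "4*cc*(ca + cb * t + cc * t^2) = (2*cc*t + cb)^2 + (4*ca*cc - cb^2)"
    by (simp add: algebra_simps power2_eq_square)
  also have "\<dots> \<ge> 0" using cond by simp
  finally have "0 \<le> ca + cb * t + cc * t^2" using cond(2)
    by (simp add: zero_le_mult_iff)
  thus ?thesis using b by linarith
qed

lemma cond1: "0 \<le> x \<Longrightarrow> x * (x - (-2::real)) \<le> (81/20::real) * 2 powr (x - real (1::nat))"
proof -
  assume x0: "0 \<le> x"
  consider "0/8 \<le> x \<and> x \<le> 11/8" | "11/8 \<le> x \<and> x \<le> 14/8" | "14/8 \<le> x \<and> x \<le> 16/8" | "16/8 \<le> x \<and> x \<le> 17/8" | "17/8 \<le> x" using x0 by linarith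
  then show ?thesis
  proof cases
    case 1 then show ?thesis by - (rule piece[where p=0 and K="(1/2::real)" and G="(81/20::real)" and al="(-2::real)" and m=1 and ca="(81/40::real)" and cb="(-13/20::real)" and cc="(-11/20::real)" and j=11]; simp add: min_def power_divide power2_eq_square)
  next
    case 2 then show ?thesis by - (rule piece[where p=11 and K="(162/125::real)" and G="(81/20::real)" and al="(-2::real)" and m=1 and ca="(24327/40000::real)" and cb="(-3127/2500::real)" and cc="(104/625::real)" and j=3]; simp add: min_def power_divide power2_eq_square)
  next
    case 3 then show ?thesis by - (rule piece[where p=14 and K="(1681/1000::real)" and G="(81/20::real)" and al="(-2::real)" and m=1 and ca="(4911/20000::real)" and cb="(-9613/10000::real)" and cc="(5129/10000::real)" and j=2]; simp add: min_def power_divide power2_eq_square)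
  next
    case 4 then show ?thesis by - (rule piece[where p=16 and K="(2::real)" and G="(81/20::real)" and al="(-2::real)" and m=1 and ca="(1/10::real)" and cb="(-3/5::real)" and cc="(4/5::real)" and j=1]; simp add: min_def power_divide power2_eq_square)
  next
    case 5 then show ?thesis by - (rule piece_inf[where p=17 and K="(2181/1000::real)" and G="(81/20::real)" and al="(-2::real)" and m=1 and ca="(2697/40000::real)" and cb="(-3613/10000::real)" and cc="(9629/10000::real)"]; simp add: power_divide power2_eq_square)
  qed
qed

lemma cond2: "0 \<le> x \<Longrightarrow> x * (x - (7/4::real)) \<le> (227/100::real) * 2 powr (x - real (2::nat))"
proof -
  assume x0: "0 \<le> x"
  consider "0/8 \<le> x \<and> x \<le> 6/8" | "6/8 \<le> x \<and> x \<le> 17/8" | "17/8 \<le> x \<and> x \<le> 26/8" | "26/8 \<le> x \<and> x \<le> 29/8" | "29/8 \<le> x \<and> x \<le> 30/8" | "30/8 \<le> x \<and> x \<le> 31/8" | "31/8 \<le> x" using x0 by linarith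
  then show ?thesis
  proof cases
    case 1 then show ?thesis by - (rule piece[where p=0 and K="(1/4::real)" and G="(227/100::real)" and al="(7/4::real)" and m=2 and ca="(227/400::real)" and cb="(1277/600::real)" and cc="(-1573/1800::real)" and j=6]; simp add: min_def power_divide power2_eq_square)
  next
    case 2 then show ?thesis by - (rule piece[where p=6 and K="(21/50::real)" and G="(227/100::real)" and al="(7/4::real)" and m=2 and ca="(8517/5000::real)" and cb="(1107/1250::real)" and cc="(-5911/7500::real)" and j=11]; simp add: min_def power_divide power2_eq_square)
  next
    case 3 then show ?thesis by - (rule piece[where p=17 and K="(109/100::real)" and G="(227/100::real)" and al="(7/4::real)" and m=2 and ca="(67097/40000::real)" and cb="(-12757/15000::real)" and cc="(-20257/45000::real)" and j=9]; simp add: min_def power_divide power2_eq_square)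
  next
    case 4 then show ?thesis by - (rule piece[where p=26 and K="(1189/500::real)" and G="(227/100::real)" and al="(7/4::real)" and m=2 and ca="(26153/50000::real)" and cb="(-86347/75000::real)" and cc="(44903/225000::real)" and j=3]; simp add: min_def power_divide power2_eq_square)
  next
    case 5 then show ?thesis by - (rule piece[where p=29 and K="(771/250::real)" and G="(227/100::real)" and al="(7/4::real)" and m=2 and ca="(40761/200000::real)" and cb="(-10411/12500::real)" and cc="(20839/37500::real)" and j=1]; simp add: min_def power_divide power2_eq_square)
  next
    case 6 then show ?thesis by - (rule piece[where p=30 and K="(3363/1000::real)" and G="(227/100::real)" and al="(7/4::real)" and m=2 and ca="(13401/100000::real)" and cb="(-33033/50000::real)" and cc="(104467/150000::real)" and j=1]; simp add: min_def power_divide power2_eq_square)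
  next
    case 7 then show ?thesis by - (rule piece_inf[where p=31 and K="(917/250::real)" and G="(227/100::real)" and al="(7/4::real)" and m=2 and ca="(18397/200000::real)" and cb="(-16841/37500::real)" and cc="(95659/112500::real)"]; simp add: power_divide power2_eq_square)
  qed
qed

lemma cond3: "0 \<le> x \<Longrightarrow> x * (x - (7/2::real)) \<le> (2::real) * 2 powr (x - real (3::nat))"
proof -
  assume x0: "0 \<le> x"
  consider "0/8 \<le> x \<and> x \<le> 4/8" | "4/8 \<le> x \<and> x \<le> 15/8" | "15/8 \<le> x \<and> x \<le> 32/8" | "32/8 \<le> x \<and> x \<le> 40/8" | "40/8 \<le> x" using x0 by linarith
  then show ?thesis
  proof cases
    case 1 then show ?thesis by - (rule piece[where p=0 and K="(1/8::real)" and G="(2::real)" and al="(7/2::real)" and m=3 and ca="(1/4::real)" and cb="(11/3::real)" and cc="(-17/18::real)" and j=4]; simp add: min_def power_divide power2_eq_square)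
  next
    case 2 then show ?thesis by - (rule piece[where p=4 and K="(22/125::real)" and G="(2::real)" and al="(7/2::real)" and m=3 and ca="(463/250::real)" and cb="(2051/750::real)" and cc="(-1037/1125::real)" and j=11]; simp add: min_def power_divide power2_eq_square)
  next
    case 3 then show ?thesis by - (rule piece[where p=15 and K="(229/500::real)" and G="(2::real)" and al="(7/2::real)" and m=3 and ca="(31703/8000::real)" and cb="(541/1500::real)" and cc="(-896/1125::real)" and j=17]; simp add: min_def power_divide power2_eq_square)
  next
    case 4 then show ?thesis by - (rule piece[where p=32 and K="(2::real)" and G="(2::real)" and al="(7/2::real)" and m=3 and ca="(2::real)" and cb="(-11/6::real)" and cc="(-1/9::real)" and j=8]; simp add: min_def power_divide power2_eq_square)
  next
    case 5 then show ?thesis by - (rule piece_inf[where p=40 and K="(4::real)" and G="(2::real)" and al="(7/2::real)" and m=3 and ca="(1/2::real)" and cb="(-7/6::real)" and cc="(7/9::real)"]; simp add: power_divide power2_eq_square)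
  qed
qed



lemma dual:
  fixes m :: nat
  assumes m1: "1 \<le> m"
  shows "\<exists>al G. (\<forall>x. 0 \<le> x \<longrightarrow> x*(x-al) \<le> G * 2 powr (x - real m)) \<and> 0 \<le> G \<and> 0 \<le> al + G
     \<and> al + G \<le> real m + log 2 (real m + log 2 (real m) + 1.1)
     \<and> (2 \<le> m \<longrightarrow> 0 \<le> al \<and> al + G \<le> real m + log 2 (real m + log 2 (real m) + 2.5))"
proof -
  have mono: "log 2 (real m + log 2 (real m) + 1.1) \<le> log 2 (real m + log 2 (real m) + 2.5)"
  proof -
    have "0 \<le> log 2 (real m)" using m1 by simp
    thus ?thesis by (subst log_le_cancel_iff) auto
  qed
  have "m = 1 \<or> m = 2 \<or> m = 3 \<or> 4 \<le> m" using m1 by linarith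
  moreover
  { assume m: "m = 1"
    have c: "\<forall>x. 0 \<le> x \<longrightarrow> x*(x-(-2::real)) \<le> (81/20::real) * 2 powr (x - real m)"
      unfolding m using cond1 by blast
    have "2 powr (real (21::nat) / real (20::nat)) \<le> (2.1::real)"
      by (rule pow2_root_ge) (simp_all add: power_divide)
    hence "21/20 \<le> log 2 (2.1::real)" by (subst le_log_iff) auto
    hence t: "-2 + 81/20 \<le> real m + log 2 (real m + log 2 (real m) + 1.1)" unfolding m by simp
    have ?thesis
      by (rule exI[of _ "-2"], rule exI[of _ "81/20"]) (use c t m in auto) }
  moreover
  { assume m: "m = 2"
    have c: "\<forall>x. 0 \<le> x \<longrightarrow> x*(x-(7/4::real)) \<le> (227/100::real) * 2 powr (x - real m)"
      unfolding m using cond2 by blast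
    have "2 powr (real (101::nat) / real (50::nat)) \<le> (4.1::real)"
      by (rule pow2_root_ge) (simp_all add: power_divide)
    hence "101/50 \<le> log 2 (4.1::real)" by (subst le_log_iff) auto
    hence t: "7/4 + 227/100 \<le> real m + log 2 (real m + log 2 (real m) + 1.1)" unfolding m by simp
    have t2: "7/4 + 227/100 \<le> real m + log 2 (real m + log 2 (real m) + 2.5)" using t mono by linarith
    have ?thesis
      by (rule exI[of _ "7/4"], rule exI[of _ "227/100"]) (use c t t2 m in auto) }
  moreover
  { assume m: "m = 3"
    have c: "\<forall>x. 0 \<le> x \<longrightarrow> x*(x-(7/2::real)) \<le> (2::real) * 2 powr (x - real m)"
      unfolding m using cond3 by blast
    have "2 powr (real (79::nat) / real (50::nat)) \<le> (3::real)"
      by (rule pow2_root_ge) (simp_all add: power_divide)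
    hence l3: "79/50 \<le> log 2 (3::real)" by (subst le_log_iff) auto
    have "2 powr (real (5::nat) / real (2::nat)) \<le> (5.68::real)"
      by (rule pow2_root_ge) (simp_all add: power_divide)
    hence "5/2 \<le> log 2 (5.68::real)" by (subst le_log_iff) auto
    also have "log 2 (5.68::real) \<le> log 2 (3 + log 2 3 + 1.1)" using l3 by (subst log_le_cancel_iff) auto
    finally have t: "7/2 + 2 \<le> real m + log 2 (real m + log 2 (real m) + 1.1)" unfolding m by simp
    have ?thesis
      by (rule exI[of _ "7/2"], rule exI[of _ "2"]) (use c t m mono in auto) }
  moreover
  { assume m: "4 \<le> m"
    obtain al G where "\<forall>x. 0 \<le> x \<longrightarrow> x*(x-al) \<le> G * 2 powr (x - real m)" "0 \<le> G" "0 \<le> al"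
          "al + G = real m + log 2 (real m + log 2 (real m) + 1.1)"
      using cond_large[OF m] by blast
    hence ?thesis using mono by (intro exI[of _ al] exI[of _ G]) auto }
  ultimately show ?thesis by blast
qed

theorem mainTheorem2:
  fixes \<Omega> :: "'a set" and D :: "'a \<Rightarrow> real" and m :: nat
  assumes "m \<ge> 1"
    and "finite \<Omega>" and "card \<Omega> = 2 ^ m"
    and "\<And>y. y \<in> \<Omega> \<Longrightarrow> 0 \<le> D y \<and> D y \<le> 1"
    and "(\<Sum>y\<in>\<Omega>. D y) \<le> 1"
  shows "(entropy2 D \<Omega> \<ge> 1 \<longrightarrow>
           logsq_moment D \<Omega> / (entropy2 D \<Omega>)^2
             \<le> (1 + log 2 (real m + log 2 (real m) + 1.1) / real m) * real m)
       \<and> (entropy2 D \<Omega> \<le> 1 \<and> m \<ge> 2 \<longrightarrow>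
           logsq_moment D \<Omega> \<le> real m + log 2 (real m + log 2 (real m) + 2.5))"
proof -
  obtain al G where c: "\<forall>x. 0 \<le> x \<longrightarrow> x*(x-al) \<le> G * 2 powr (x - real m)" and G: "0 \<le> G"
     and s0: "0 \<le> al + G" and s1: "al + G \<le> real m + log 2 (real m + log 2 (real m) + 1.1)"
     and s2: "2 \<le> m \<longrightarrow> 0 \<le> al \<and> al + G \<le> real m + log 2 (real m + log 2 (real m) + 2.5)"
    using dual[OF assms(1)] by blast
  define H where "H = entropy2 D \<Omega>"
  define M where "M = logsq_moment D \<Omega>"
  have red: "M \<le> al * H + G" unfolding M_def H_def
    by (rule reduction[OF assms(2,3,4)]) (use c G in auto)
  have i: "M / H^2 \<le> (1 + log 2 (real m + log 2 (real m) + 1.1) / real m) * real m" if H1: "1 \<le> H"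
  proof -
    have "(al + G) * H^2 - (al * H + G) = (H - 1) * ((al + G) * H + G)"
      by (simp add: algebra_simps power2_eq_square)
    moreover have "0 \<le> (H - 1) * ((al + G) * H + G)"
      using H1 s0 G by (intro mult_nonneg_nonneg) auto
    ultimately have "M \<le> (al + G) * H^2" using red by linarith
    hence "M / H^2 \<le> al + G" using H1 by (simp add: pos_divide_le_eq)
    also have "\<dots> \<le> (1 + log 2 (real m + log 2 (real m) + 1.1) / real m) * real m"
    proof -
      have "(1 + log 2 (real m + log 2 (real m) + 1.1) / real m) * real m
          = real m + log 2 (real m + log 2 (real m) + 1.1)" using assms(1) by (simp add: field_simps)
      thus ?thesis using s1 by linarith
    qed
    finally show ?thesis .
  qed
  have ii: "M \<le> real m + log 2 (real m + log 2 (real m) + 2.5)" if H1: "H \<le> 1" and m2: "2 \<le> m"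
  proof -
    have al0: "0 \<le> al" and t: "al + G \<le> real m + log 2 (real m + log 2 (real m) + 2.5)"
      using s2 m2 by auto
    have "al * H \<le> al * 1" using al0 H1 by (intro mult_left_mono) auto
    thus ?thesis using red t by linarith
  qed
  show ?thesis using i ii unfolding M_def H_def by auto
qed

end
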